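(* Let $m\ge 0$ and let $f:\mathbb{R}^n\to\mathbb{R}\cup\{+\infty\}$ be a closed (lower semicontinuous), proper, $m$-weakly convex function. Let $\eta\ge 0$, $\epsilon\ge 0$, and suppose $x\in\mathrm{dom}\,f$ is an $(\eta,\epsilon)$-inexact stationary point of $f$. Then for every $\lambda>0$, $$\|\nabla f_{m+\lambda}(x)\|\le (m+\lambda)\left(\frac{2}{\lambda}\eta+\sqrt{\frac{2}{\lambda}\epsilon}\right).$$ In particular, if $m>0$, then $\|\nabla f_{2m}(x)\|\le 4\eta+2\sqrt{2m\epsilon}$.
   Context: A function $f$ is $m$-weakly convex ($m\ge 0$) if $x\mapsto f(x)+\frac{m}{2}\|x\|^2$ is convex. For such $f$ and $\epsilon\ge 0$, the $\epsilon$-inexact subdifferential at $x\in\mathrm{dom}\,f$ is $\partial_\epsilon f(x)=\{v\in\mathbb{R}^n: f(y)\ge f(x)+\langle v,y-x\rangle-\frac{m}{2}\|y-x\|^2-\epsilon\ \ \forall y\in\mathbb{R}^n\}$; for $\epsilon=0$ this is the (Fréchet) subdifferential $\partial f(x)$. A point $x$ is an $(\eta,\epsilon)$-inexact stationary point if $\mathrm{dist}(0,\partial_\epsilon f(x))\le\eta$. For $\rho>m$ the Moreau envelope is $f_\rho(x)=\inf_{y}\{f(y)+\frac{\rho}{2}\|y-x\|^2\}$; it is continuously differentiable with $\nabla f_\rho(x)=\rho(x-\hat x)$, where $\hat x=\arg\min_y\{f(y)+\frac{\rho}{2}\|y-x\|^2\}$ (unique). *)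

theory Defs
  imports "HOL-Analysis.Analysis"
begin

text \<open>Extended-real valued functions f : R^n -> R \<union> {+inf}; value -inf is excluded by properness.\<close>

definition dom_f :: "('a \<Rightarrow> ereal) \<Rightarrow> 'a set" where
  "dom_f f = {x. f x < \<infinity>}"

definition proper_fun :: "('a \<Rightarrow> ereal) \<Rightarrow> bool" where
  "proper_fun f \<longleftrightarrow> (\<forall>x. f x \<noteq> -\<infinity>) \<and> (\<exists>x. f x < \<infinity>)"

definition closed_fun :: "('a::topological_space \<Rightarrow> ereal) \<Rightarrow> bool" where
  "closed_fun f \<longleftrightarrow> closed {(x, r::real). f x \<le> ereal r}"

definition weakly_convex :: "real \<Rightarrow> ('a::real_normed_vector \<Rightarrow> ereal) \<Rightarrow> bool" where
  "weakly_convex m f \<longleftrightarrow>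
     convex {(x, r::real). f x + ereal (m / 2 * (norm x)\<^sup>2) \<le> ereal r}"

definition inexact_subdiff ::
  "real \<Rightarrow> real \<Rightarrow> ('a::real_inner \<Rightarrow> ereal) \<Rightarrow> 'a \<Rightarrow> 'a set" where
  "inexact_subdiff m \<epsilon> f x =
     {v. \<forall>y. f y \<ge> f x + ereal (inner v (y - x) - m / 2 * (norm (y - x))\<^sup>2 - \<epsilon>)}"

text \<open>dist(0, S) \<le> eta, with the convention dist(0, {}) = +inf.\<close>
definition inexact_stationary ::
  "real \<Rightarrow> real \<Rightarrow> real \<Rightarrow> ('a::real_inner \<Rightarrow> ereal) \<Rightarrow> 'a \<Rightarrow> bool" where
  "inexact_stationary m \<eta> \<epsilon> f x \<longleftrightarrow>
     inexact_subdiff m \<epsilon> f x \<noteq> {} \<and> infdist 0 (inexact_subdiff m \<epsilon> f x) \<le> \<eta>"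

definition moreau_env :: "('a::real_normed_vector \<Rightarrow> ereal) \<Rightarrow> real \<Rightarrow> 'a \<Rightarrow> ereal" where
  "moreau_env f \<rho> x = (INF y. f y + ereal (\<rho> / 2 * (norm (y - x))\<^sup>2))"

end

theory Submission
  imports Defs
begin

lemma norm_comb_sq:
  fixes a b :: "'a::real_inner"
  shows "(norm (t *\<^sub>R a + (1-t) *\<^sub>R b))\<^sup>2 = t*(norm a)\<^sup>2 + (1-t)*(norm b)\<^sup>2 - t*(1-t)*(norm (a-b))\<^sup>2"
  by (simp add: power2_norm_eq_inner inner_add_left inner_add_right inner_diff_left inner_diff_right inner_commute algebra_simps)

lemma wc_ineq:
  fixes f :: "'a::real_inner \<Rightarrow> ereal"
  assumes wc: "weakly_convex m f" and ninf: "\<And>x. f x \<noteq> -\<infinity>"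
    and fa: "f a < \<infinity>" and fb: "f b < \<infinity>" and t: "0 \<le> t" "t \<le> 1"
  shows "f (t *\<^sub>R a + (1-t) *\<^sub>R b) \<le> ereal (t * real_of_ereal (f a) + (1-t) * real_of_ereal (f b) + m/2*t*(1-t)*(norm(a-b))\<^sup>2)"
proof -
  let ?E = "{(x, r::real). f x + ereal (m / 2 * (norm x)\<^sup>2) \<le> ereal r}"
  have cv: "convex ?E" using wc unfolding weakly_convex_def .
  have ea: "f a = ereal (real_of_ereal (f a))" using fa ninf[of a] by (cases "f a") auto
  have eb: "f b = ereal (real_of_ereal (f b))" using fb ninf[of b] by (cases "f b") auto
  define ra where "ra = real_of_ereal (f a) + m / 2 * (norm a)\<^sup>2"
  define rb where "rb = real_of_ereal (f b) + m / 2 * (norm b)\<^sup>2"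
  have A: "(a, ra) \<in> ?E" using ea unfolding ra_def by (simp, metis order_refl plus_ereal.simps(1))
  have B: "(b, rb) \<in> ?E" using eb unfolding rb_def by (simp, metis order_refl plus_ereal.simps(1))
  have "t *\<^sub>R (a, ra) + (1-t) *\<^sub>R (b, rb) \<in> ?E"
    using convexD[OF cv A B, of t "1-t"] t by auto
  hence "f (t *\<^sub>R a + (1-t) *\<^sub>R b) + ereal (m / 2 * (norm (t *\<^sub>R a + (1-t) *\<^sub>R b))\<^sup>2) \<le> ereal (t*ra + (1-t)*rb)"
    by simp
  hence "f (t *\<^sub>R a + (1-t) *\<^sub>R b) \<le> ereal (t*ra + (1-t)*rb - m / 2 * (norm (t *\<^sub>R a + (1-t) *\<^sub>R b))\<^sup>2)"
    by (metis ereal_minus(1) ereal_minus_le_iff ereal_minus_mono ereal_plus_eq_PInfty ereal_uminus_uminus order.refl ereal_le_minus_iff  ereal_less_PInfty)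
  also have "t*ra + (1-t)*rb - m / 2 * (norm (t *\<^sub>R a + (1-t) *\<^sub>R b))\<^sup>2
     = t * real_of_ereal (f a) + (1-t) * real_of_ereal (f b) + m/2*t*(1-t)*(norm(a-b))\<^sup>2"
    unfolding norm_comb_sq ra_def rb_def by (simp add: field_simps)
  finally show ?thesis .
qed

lemma quad_bound:
  fixes t B C lam :: real
  assumes "lam > 0" "0 \<le> t" "lam/2 * t^2 \<le> B * t + C" "B \<ge> 0"
  shows "t \<le> max 1 (2*(B + \<bar>C\<bar>)/lam)"
proof (cases "t \<le> 1")
  case False
  have "\<bar>C\<bar> \<le> \<bar>C\<bar> * t" using False by (simp add: mult_le_cancel_left1)
  hence "lam/2 * t^2 \<le> (B + \<bar>C\<bar>) * t" using assms by (simp add: distrib_right)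
  hence "lam/2 * t \<le> B + \<bar>C\<bar>" using False by (simp add: power2_eq_square)
  hence "t \<le> 2*(B + \<bar>C\<bar>)/lam" using assms by (simp add: field_simps)
  thus ?thesis by simp
qed simp

lemma prox_exists:
  fixes f :: "real^'n \<Rightarrow> ereal"
  assumes cl: "closed_fun f" and ninf: "\<And>y. f y \<noteq> -\<infinity>"
    and lb: "\<And>y. f y \<ge> ereal (c + inner v (y - a) - m/2*(norm (y - a))\<^sup>2)"
    and m: "0 \<le> m" "m < \<rho>" and fa: "f a < \<infinity>"
  shows "\<exists>p. f p < \<infinity> \<and> (\<forall>y. f p + ereal (\<rho>/2*(norm (p - z))\<^sup>2) \<le> f y + ereal (\<rho>/2*(norm (y - z))\<^sup>2))"
proof -
  define M where "M = real_of_ereal (f a) + \<rho>/2*(norm (a - z))\<^sup>2"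
  define h where "h = (\<lambda>q::(real^'n) \<times> real. snd q + \<rho>/2*(norm (fst q - z))\<^sup>2)"
  define K where "K = {(y, r::real). f y \<le> ereal r} \<inter> {q. h q \<le> M}"
  define B where "B = norm v + \<rho> * norm (z - a)"
  define R where "R = max 1 (2*(B + \<bar>M - c\<bar>)/(\<rho> - m))"
  define lo where "lo = c - norm v * R - m/2 * R^2"
  have ea: "f a = ereal (real_of_ereal (f a))" using fa ninf[of a] by (cases "f a") auto
  have contb: "continuous_on UNIV h" unfolding h_def by (intro continuous_intros)
  have clK: "closed K" unfolding K_def
    using cl unfolding closed_fun_def
    by (intro closed_Int) (simp_all add: closed_Collect_le[OF contb continuous_on_const])
  have Kin: "q \<in> cball a R \<times> {lo..M}" if "q \<in> K" for q
  proof -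
    obtain y r where q: "q = (y, r)" by (cases q)
    have fy: "f y \<le> ereal r" and hr: "r + \<rho>/2*(norm (y - z))\<^sup>2 \<le> M"
      using that q unfolding K_def h_def by auto
    have lr: "c + inner v (y - a) - m/2*(norm (y - a))\<^sup>2 \<le> r"
      using lb[of y] fy by (metis ereal_less_eq(3) order.trans)
    define t where "t = norm (y - a)"
    define w where "w = norm (z - a)"
    have t0: "t \<ge> 0" "w \<ge> 0" unfolding t_def w_def by auto
    have i1: "inner v (y - a) \<ge> - norm v * t" unfolding t_def
      using Cauchy_Schwarz_ineq2[of v "y-a"] by linarith
    have yz: "y - z = (y - a) - (z - a)" by simp
    have i2: "(norm (y - z))\<^sup>2 \<ge> t^2 - 2 * t * w"
    proof -
      have "(norm (y - z))\<^sup>2 = t^2 - 2 * inner (y - a) (z - a) + w^2"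
        unfolding yz t_def w_def by (simp add: power2_norm_eq_inner inner_diff_left inner_diff_right inner_commute)
      moreover have "inner (y - a) (z - a) \<le> t * w" unfolding t_def w_def
        using Cauchy_Schwarz_ineq2[of "y-a" "z-a"] by linarith
      ultimately show ?thesis using zero_le_power2[of w] by linarith
    qed
    have "c - norm v * t - m/2*t^2 + \<rho>/2*(t^2 - 2*t*w) \<le> M"
    proof -
      have "\<rho>/2*(t^2 - 2*t*w) \<le> \<rho>/2*(norm (y - z))\<^sup>2" using i2 m by (intro mult_left_mono) auto
      thus ?thesis using lr hr i1 unfolding t_def[symmetric] by linarith
    qed
    moreover have "(\<rho>-m)/2*t^2 - (B*t + (M-c)) = (c - norm v * t - m/2*t^2 + \<rho>/2*(t^2-2*t*w)) - M"
      unfolding B_def w_def[symmetric] by (simp add: algebra_simps diff_divide_distrib)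
    ultimately have qi: "(\<rho>-m)/2 * t^2 \<le> B * t + (M - c)" by linarith
    have Bnn: "B \<ge> 0" unfolding B_def using m by simp
    have tR: "t \<le> R" unfolding R_def
      using quad_bound[OF _ t0(1) qi Bnn] m by simp
    have "r \<ge> lo"
    proof -
      have "norm v * t \<le> norm v * R" using tR by (intro mult_left_mono) auto
      moreover have "t^2 \<le> R^2" using tR t0 by (intro power_mono) auto
      hence "m/2*t^2 \<le> m/2*R^2" using m by (intro mult_left_mono) auto
      ultimately show ?thesis using lr i1 unfolding lo_def t_def[symmetric] by linarith
    qed
    moreover have "r \<le> M" proof -
      have "\<rho>/2*(norm (y - z))\<^sup>2 \<ge> 0" using m by simp
      thus ?thesis using hr by linarith
    qed
    moreover have "dist a y \<le> R" using tR unfolding t_def by (simp add: dist_norm norm_minus_commute)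
    ultimately show ?thesis unfolding q by simp
  qed
  have bK: "bounded K"
    by (rule bounded_subset[OF bounded_Times[OF bounded_cball bounded_closed_interval]]) (use Kin in blast)
  have cK: "compact K" using clK bK compact_eq_bounded_closed by blast
  have ea': "f a \<le> ereal (real_of_ereal (f a))" by (rule eq_refl[OF ea])
  have aK: "(a, real_of_ereal (f a)) \<in> K" unfolding K_def h_def M_def using ea' by auto
  obtain q where qK: "q \<in> K" and qmin: "\<forall>q'\<in>K. h q \<le> h q'"
    using continuous_attains_inf[OF cK _ continuous_on_subset[OF contb]] aK by blast
  obtain p r0 where q: "q = (p, r0)" by (cases q)
  have fp: "f p \<le> ereal r0" and hM: "h q \<le> M" using qK q unfolding K_def by auto
  have "f p + ereal (\<rho>/2*(norm (p - z))\<^sup>2) \<le> f y + ereal (\<rho>/2*(norm (y - z))\<^sup>2)" for y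
  proof -
    have L: "f p + ereal (\<rho>/2*(norm (p - z))\<^sup>2) \<le> ereal (h q)"
      using add_right_mono[OF fp, of "ereal (\<rho>/2*(norm (p - z))\<^sup>2)"] unfolding q h_def by simp
    show ?thesis
    proof (cases "f y = \<infinity>")
      case True thus ?thesis by simp
    next
      case False
      hence ey: "f y = ereal (real_of_ereal (f y))" using ninf[of y] by (cases "f y") auto
      have "h q \<le> real_of_ereal (f y) + \<rho>/2*(norm (y - z))\<^sup>2"
      proof (cases "real_of_ereal (f y) + \<rho>/2*(norm (y - z))\<^sup>2 \<le> M")
        case True
        moreover have "f y \<le> ereal (real_of_ereal (f y))" by (rule eq_refl[OF ey])
        ultimately have "(y, real_of_ereal (f y)) \<in> K" unfolding K_def h_def by auto
        with qmin have "h q \<le> h (y, real_of_ereal (f y))" by blast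
        thus ?thesis by (simp add: h_def)
      next
        case False thus ?thesis using hM by linarith
      qed
      hence "ereal (h q) \<le> f y + ereal (\<rho>/2*(norm (y - z))\<^sup>2)" by (subst ey) simp
      with L show ?thesis by (rule order.trans)
    qed
  qed
  moreover have "f p < \<infinity>" using fp by (cases "f p") auto
  ultimately show ?thesis by blast
qed

lemma strong_min:
  fixes f :: "'a::real_inner \<Rightarrow> ereal"
  assumes wc: "weakly_convex m f" and ninf: "\<And>x. f x \<noteq> -\<infinity>"
    and fp: "f p < \<infinity>" and fy: "f y < \<infinity>"
    and pmin: "\<forall>y. f p + ereal (\<rho>/2*(norm (p - z))\<^sup>2) \<le> f y + ereal (\<rho>/2*(norm (y - z))\<^sup>2)"
  shows "real_of_ereal (f p) + \<rho>/2*(norm (p - z))\<^sup>2 + (\<rho>-m)/2*(norm (y - p))\<^sup>2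
         \<le> real_of_ereal (f y) + \<rho>/2*(norm (y - z))\<^sup>2"
proof -
  define Fp where "Fp = real_of_ereal (f p)"
  define Fy where "Fy = real_of_ereal (f y)"
  define D where "D = (norm (y - p))\<^sup>2"
  define Pp where "Pp = Fp + \<rho>/2*(norm (p - z))\<^sup>2"
  define Py where "Py = Fy + \<rho>/2*(norm (y - z))\<^sup>2"
  have ep: "f p = ereal Fp" unfolding Fp_def using fp ninf[of p] by (cases "f p") auto
  have key: "u * ((\<rho>-m)/2*D) \<le> Py - Pp" if u: "0 < u" "u < 1" for u
  proof -
    define s where "s = 1 - u"
    have s: "0 < s" "s < 1" "1 - s = u" using u unfolding s_def by auto
    define w where "w = s *\<^sub>R y + (1-s) *\<^sub>R p"
    have fw: "f w \<le> ereal (s * Fy + (1-s) * Fp + m/2 * s * (1-s) * D)"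
      unfolding w_def Fy_def Fp_def D_def using s by (intro wc_ineq[OF wc ninf fy fp]) auto
    have wz: "w - z = s *\<^sub>R (y - z) + (1-s) *\<^sub>R (p - z)" unfolding w_def by (simp add: algebra_simps)
    have nw: "(norm (w - z))\<^sup>2 = s*(norm (y - z))\<^sup>2 + (1-s)*(norm (p - z))\<^sup>2 - s * (1-s) * D"
      unfolding wz norm_comb_sq D_def by (simp add: norm_minus_commute)
    have "ereal Pp \<le> f w + ereal (\<rho>/2*(norm (w - z))\<^sup>2)"
      using pmin[rule_format, of w] unfolding ep Pp_def by simp
    also have "\<dots> \<le> ereal (s * Fy + (1-s) * Fp + m/2 * s * (1-s) * D) + ereal (\<rho>/2*(norm (w - z))\<^sup>2)"
      using fw by (rule add_right_mono)
    finally have "Pp \<le> s * Fy + (1-s) * Fp + m/2 * s * (1-s) * D + \<rho>/2*(norm (w - z))\<^sup>2" by simp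
    also have "\<dots> = s * Py + (1-s) * Pp - s * (u * ((\<rho>-m)/2*D))"
      unfolding nw Py_def Pp_def s(3)[symmetric] by (simp add: algebra_simps diff_divide_distrib)
    finally have "s * (u * ((\<rho>-m)/2*D)) \<le> s * (Py - Pp)" by (simp add: algebra_simps)
    thus ?thesis using s by simp
  qed
  have "(\<rho>-m)/2*D \<le> Py - Pp" by (rule field_le_mult_one_interval) (use key in auto)
  thus ?thesis unfolding Py_def Pp_def Fy_def Fp_def D_def by simp
qed

lemma env_deriv:
  fixes f :: "real^'n \<Rightarrow> ereal"
  assumes cl: "closed_fun f" and ninf: "\<And>y. f y \<noteq> -\<infinity>" and wc: "weakly_convex m f"
    and lb: "\<And>y. f y \<ge> ereal (c + inner v (y - a) - m/2*(norm (y - a))\<^sup>2)"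
    and m: "0 \<le> m" "m < \<rho>" and fa: "f a < \<infinity>"
  shows "\<exists>p. f p < \<infinity> \<and> (\<forall>y. f p + ereal (\<rho>/2*(norm (p - x))\<^sup>2) \<le> f y + ereal (\<rho>/2*(norm (y - x))\<^sup>2))
     \<and> ((\<lambda>y. real_of_ereal (moreau_env f \<rho> y)) has_derivative (\<lambda>h. inner (\<rho> *\<^sub>R (x - p)) h)) (at x)"
proof -
  have "\<forall>z. \<exists>p. f p < \<infinity> \<and> (\<forall>y. f p + ereal (\<rho>/2*(norm (p - z))\<^sup>2) \<le> f y + ereal (\<rho>/2*(norm (y - z))\<^sup>2))"
    using prox_exists[OF cl ninf lb m fa] by blast
  then obtain P where P: "\<And>z. f (P z) < \<infinity>"
    and Pmin: "\<And>z. \<forall>y. f (P z) + ereal (\<rho>/2*(norm (P z - z))\<^sup>2) \<le> f y + ereal (\<rho>/2*(norm (y - z))\<^sup>2)"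
    by metis
  define F where "F = (\<lambda>y. real_of_ereal (f y))"
  define E where "E = (\<lambda>y. real_of_ereal (moreau_env f \<rho> y))"
  have eF: "f y = ereal (F y)" if "f y < \<infinity>" for y unfolding F_def using that ninf[of y] by (cases "f y") auto
  have envP: "moreau_env f \<rho> z = f (P z) + ereal (\<rho>/2*(norm (P z - z))\<^sup>2)" for z
    unfolding moreau_env_def
  proof (rule antisym)
    show "(INF y. f y + ereal (\<rho> / 2 * (norm (y - z))\<^sup>2)) \<le> f (P z) + ereal (\<rho>/2*(norm (P z - z))\<^sup>2)"
      by (rule INF_lower) simp
    show "f (P z) + ereal (\<rho>/2*(norm (P z - z))\<^sup>2) \<le> (INF y. f y + ereal (\<rho> / 2 * (norm (y - z))\<^sup>2))"
      by (rule INF_greatest) (use Pmin in auto)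
  qed
  have EP: "E z = F (P z) + \<rho>/2*(norm (P z - z))\<^sup>2" for z
    unfolding E_def envP eF[OF P] by simp
  have Pmin': "F (P z) + \<rho>/2*(norm (P z - z))\<^sup>2 \<le> F y + \<rho>/2*(norm (y - z))\<^sup>2" if "f y < \<infinity>" for z y
    using Pmin[of z, rule_format, of y] unfolding eF[OF P] eF[OF that] by simp
  have SC: "F (P z) + \<rho>/2*(norm (P z - z))\<^sup>2 + (\<rho>-m)/2*(norm (y - P z))\<^sup>2 \<le> F y + \<rho>/2*(norm (y - z))\<^sup>2"
    if "f y < \<infinity>" for z y
    unfolding F_def by (rule strong_min[OF wc ninf P that Pmin])
  define lam where "lam = \<rho> - m"
  have lam: "lam > 0" unfolding lam_def using m by simp
  have ident: "(norm (q - x))\<^sup>2 - (norm (p - x))\<^sup>2 + (norm (p - z))\<^sup>2 - (norm (q - z))\<^sup>2 = 2 * inner (q - p) (z - x)"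
    for p q z :: "real^'n"
    by (simp add: power2_norm_eq_inner inner_diff_left inner_diff_right inner_commute algebra_simps)
  have lip: "lam * norm (P z - P x) \<le> \<rho> * norm (z - x)" for z
  proof -
    define p where "p = P x"
    define q where "q = P z"
    have A: "F p + \<rho>/2*(norm (p - x))\<^sup>2 + lam/2*(norm (q - p))\<^sup>2 \<le> F q + \<rho>/2*(norm (q - x))\<^sup>2"
      using SC[OF P, of x z] unfolding p_def q_def lam_def .
    have B: "F q + \<rho>/2*(norm (q - z))\<^sup>2 + lam/2*(norm (p - q))\<^sup>2 \<le> F p + \<rho>/2*(norm (p - z))\<^sup>2"
      using SC[OF P, of z x] unfolding p_def q_def lam_def .
    have "lam * (norm (q - p))\<^sup>2 \<le> \<rho>/2 * ((norm (q - x))\<^sup>2 - (norm (p - x))\<^sup>2 + (norm (p - z))\<^sup>2 - (norm (q - z))\<^sup>2)"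
      using A B by (simp add: norm_minus_commute algebra_simps)
    also have "\<dots> = \<rho> * inner (q - p) (z - x)" unfolding ident by simp
    also have "\<dots> \<le> \<rho> * (norm (q - p) * norm (z - x))"
      using m Cauchy_Schwarz_ineq2[of "q - p" "z - x"] by (intro mult_left_mono) auto
    finally have "norm (q - p) * (lam * norm (q - p)) \<le> norm (q - p) * (\<rho> * norm (z - x))"
      by (simp add: power2_eq_square algebra_simps)
    hence "lam * norm (q - p) \<le> \<rho> * norm (z - x)" if "norm (q - p) > 0" using that by simp
    moreover have "lam * norm (q - p) \<le> \<rho> * norm (z - x)" if "norm (q - p) = 0" using that m by simp
    ultimately show ?thesis unfolding p_def q_def using norm_ge_zero[of "P z - P x"] by linarith
  qed
  define p where "p = P x"
  define C where "C = \<rho>/2 + \<rho>*\<rho>/lam"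
  have bound: "\<bar>E z - E x - inner (\<rho> *\<^sub>R (x - p)) (z - x)\<bar> \<le> C * (norm (z - x))\<^sup>2" for z
  proof -
    define q where "q = P z"
    define h where "h = z - x"
    have up: "E z \<le> F p + \<rho>/2*(norm (p - z))\<^sup>2" unfolding EP q_def using Pmin'[OF P] p_def by blast
    have lo: "E x \<le> F q + \<rho>/2*(norm (q - x))\<^sup>2" unfolding EP p_def using Pmin'[OF P] q_def by blast
    have Ex: "E x = F p + \<rho>/2*(norm (p - x))\<^sup>2" unfolding EP p_def ..
    have Ez: "E z = F q + \<rho>/2*(norm (q - z))\<^sup>2" unfolding EP q_def ..
    have e1: "(norm (p - z))\<^sup>2 = (norm (p - x))\<^sup>2 - 2 * inner (p - x) h + (norm h)\<^sup>2"
      unfolding h_def by (simp add: power2_norm_eq_inner inner_diff_left inner_diff_right inner_commute algebra_simps)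
    have e2: "(norm (q - z))\<^sup>2 = (norm (q - x))\<^sup>2 - 2 * inner (q - x) h + (norm h)\<^sup>2"
      unfolding h_def by (simp add: power2_norm_eq_inner inner_diff_left inner_diff_right inner_commute algebra_simps)
    have g: "inner (\<rho> *\<^sub>R (x - p)) h = - (\<rho> * inner (p - x) h)"
      by (simp add: inner_diff_left algebra_simps)
    have d1: "\<rho>/2*(norm (p - z))\<^sup>2 = \<rho>/2*(norm (p - x))\<^sup>2 - \<rho> * inner (p - x) h + \<rho>/2*(norm h)\<^sup>2"
      unfolding e1 by (simp add: algebra_simps)
    have d2: "\<rho>/2*(norm (q - z))\<^sup>2 = \<rho>/2*(norm (q - x))\<^sup>2 - \<rho> * inner (q - x) h + \<rho>/2*(norm h)\<^sup>2"
      unfolding e2 by (simp add: algebra_simps)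
    have d3: "\<rho> * inner (p - q) h = \<rho> * inner (p - x) h - \<rho> * inner (q - x) h"
      by (simp add: inner_diff_left algebra_simps)
    have U: "E z - E x - inner (\<rho> *\<^sub>R (x - p)) h \<le> \<rho>/2 * (norm h)\<^sup>2"
      using up Ex g d1 by linarith
    have L0: "E z - E x - inner (\<rho> *\<^sub>R (x - p)) h \<ge> \<rho> * inner (p - q) h + \<rho>/2 * (norm h)\<^sup>2"
      using lo Ez g d2 d3 by linarith
    have "\<bar>inner (p - q) h\<bar> \<le> norm (q - p) * norm h"
      using Cauchy_Schwarz_ineq2[of "p - q" h] by (simp add: norm_minus_commute)
    moreover have "norm (q - p) \<le> (\<rho> * norm h) / lam" using lip[of z] lam unfolding q_def p_def h_def
      by (simp add: pos_le_divide_eq mult.commute)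
    ultimately have "\<bar>inner (p - q) h\<bar> \<le> (\<rho> * norm h) / lam * norm h"
      by (meson mult_right_mono norm_ge_zero order_trans)
    hence "- ((\<rho> * norm h) / lam * norm h) \<le> inner (p - q) h" by linarith
    hence "\<rho> * (- ((\<rho> * norm h) / lam * norm h)) \<le> \<rho> * inner (p - q) h" using m
      by (intro mult_left_mono) auto
    moreover have "\<rho> * (- ((\<rho> * norm h) / lam * norm h)) = - (\<rho>*\<rho>/lam * (norm h)\<^sup>2)"
      by (simp add: power2_eq_square)
    moreover have "C * (norm h)\<^sup>2 = \<rho>/2 * (norm h)\<^sup>2 + \<rho>*\<rho>/lam * (norm h)\<^sup>2" unfolding C_def by (simp add: distrib_right)
    moreover have "\<rho>*\<rho>/lam * (norm h)\<^sup>2 \<ge> 0" "\<rho>/2 * (norm h)\<^sup>2 \<ge> 0" using lam m by auto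
    ultimately show ?thesis using U L0 unfolding h_def by linarith
  qed
  have "((\<lambda>y. E y) has_derivative (\<lambda>h. inner (\<rho> *\<^sub>R (x - p)) h)) (at x)"
    unfolding has_derivative_iff_norm
  proof (intro conjI)
    show "bounded_linear (inner (\<rho> *\<^sub>R (x - p)))" by (rule bounded_linear_inner_right)
    have lim: "((\<lambda>z. C * norm (z - x)) \<longlongrightarrow> 0) (at x)"
    proof -
      have "((\<lambda>z. C * norm (z - x)) \<longlongrightarrow> C * norm (x - x)) (at x)"
        by (intro tendsto_intros)
      thus ?thesis by simp
    qed
    show "((\<lambda>y. norm (E y - E x - inner (\<rho> *\<^sub>R (x - p)) (y - x)) / norm (y - x)) \<longlongrightarrow> 0) (at x)"
    proof (rule Lim_null_comparison[OF _ lim], rule always_eventually, rule allI)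
      fix z
      show "norm (norm (E z - E x - inner (\<rho> *\<^sub>R (x - p)) (z - x)) / norm (z - x)) \<le> C * norm (z - x)"
      proof (cases "z = x")
        case True thus ?thesis by simp
      next
        case False
        hence pos: "norm (z - x) > 0" by simp
        have "\<bar>E z - E x - inner (\<rho> *\<^sub>R (x - p)) (z - x)\<bar> \<le> C * norm (z - x) * norm (z - x)"
          using bound[of z] by (simp add: power2_eq_square mult.assoc)
        thus ?thesis using pos by (simp add: divide_le_eq)
      qed
    qed
  qed
  moreover have "\<forall>y. f p + ereal (\<rho>/2*(norm (p - x))\<^sup>2) \<le> f y + ereal (\<rho>/2*(norm (y - x))\<^sup>2)"
    unfolding p_def by (rule Pmin)
  ultimately show ?thesis using P[of x] unfolding E_def p_def by blast
qed

lemma infdist_witness: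
  fixes S :: "'a::real_normed_vector set"
  assumes "S \<noteq> {}" "infdist 0 S < e"
  shows "\<exists>v\<in>S. norm v < e"
proof -
  have bdd: "bdd_below ((\<lambda>a. dist 0 a) ` S)" by (rule bdd_belowI[of _ 0]) auto
  have "(INF a\<in>S. dist 0 a) < e" using assms infdist_notempty by metis
  then obtain v where "v \<in> S" "dist 0 v < e" using cINF_less_iff[OF assms(1) bdd] by blast
  thus ?thesis by auto
qed

lemma quad2:
  fixes lam d \<eta> \<epsilon> :: real
  assumes "lam > 0" "d \<ge> 0" "\<eta> \<ge> 0" "\<epsilon> \<ge> 0" "lam/2 * d^2 \<le> \<eta> * d + \<epsilon>"
  shows "d \<le> 2/lam*\<eta> + sqrt (2/lam*\<epsilon>)"
proof (rule ccontr)
  define a where "a = 2/lam*\<eta>"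
  define b where "b = 2/lam*\<epsilon>"
  have a0: "a \<ge> 0" and b0: "b \<ge> 0" using assms unfolding a_def b_def by auto
  have q: "d^2 \<le> a*d + b"
  proof -
    have "2/lam * (lam/2 * d^2) \<le> 2/lam * (\<eta> * d + \<epsilon>)" using assms by (intro mult_left_mono) auto
    thus ?thesis using assms unfolding a_def b_def by (simp add: algebra_simps add_divide_distrib)
  qed
  assume "\<not> d \<le> 2/lam*\<eta> + sqrt (2/lam*\<epsilon>)"
  hence gt: "d > a + sqrt b" unfolding a_def b_def by simp
  have sb: "sqrt b \<ge> 0" using b0 by simp
  have d0: "d > 0" using gt a0 sb by linarith
  have "d * d > d * (a + sqrt b)" using gt d0 by (intro mult_strict_left_mono) auto
  moreover have "d \<ge> sqrt b" using gt a0 by linarith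
  hence "d * sqrt b \<ge> sqrt b * sqrt b" using sb by (intro mult_right_mono) auto
  moreover have "sqrt b * sqrt b = b" using b0 by simp
  ultimately have "d^2 > a*d + b" by (simp add: power2_eq_square algebra_simps)
  thus False using q by simp
qed

theorem mainTheorem1:
  fixes f :: "real ^ 'n \<Rightarrow> ereal" and m \<eta> \<epsilon> :: real and x :: "real ^ 'n"
  assumes "m \<ge> 0"
    and "closed_fun f" and "proper_fun f" and "weakly_convex m f"
    and "\<eta> \<ge> 0" and "\<epsilon> \<ge> 0"
    and "x \<in> dom_f f"
    and "inexact_stationary m \<eta> \<epsilon> f x"
  shows "(\<forall>lam>0. \<exists>g. ((\<lambda>y. real_of_ereal (moreau_env f (m + lam) y)) has_derivative (\<lambda>h. inner g h)) (at x)
            \<and> norm g \<le> (m + lam) * (2 / lam * \<eta> + sqrt (2 / lam * \<epsilon>)))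
       \<and> (m > 0 \<longrightarrow> (\<exists>g. ((\<lambda>y. real_of_ereal (moreau_env f (2 * m) y)) has_derivative (\<lambda>h. inner g h)) (at x)
            \<and> norm g \<le> 4 * \<eta> + 2 * sqrt (2 * m * \<epsilon>)))"
proof -
  note m0 = assms(1) and cl = assms(2) and wc = assms(4) and eta0 = assms(5) and eps0 = assms(6)
  have ninf: "\<And>y. f y \<noteq> -\<infinity>" using assms(3) unfolding proper_fun_def by blast
  have fx: "f x < \<infinity>" using assms(7) unfolding dom_f_def by simp
  define Fx where "Fx = real_of_ereal (f x)"
  have ex: "f x = ereal Fx" unfolding Fx_def using fx ninf[of x] by (cases "f x") auto
  define S where "S = inexact_subdiff m \<epsilon> f x"
  have Sne: "S \<noteq> {}" and Sd: "infdist 0 S \<le> \<eta>" using assms(8) unfolding inexact_stationary_def S_def by auto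
  have Sv: "f y \<ge> ereal (Fx + inner v (y - x) - m/2*(norm (y - x))\<^sup>2 - \<epsilon>)" if "v \<in> S" for v y
  proof -
    have "f y \<ge> f x + ereal (inner v (y - x) - m / 2 * (norm (y - x))\<^sup>2 - \<epsilon>)"
      using that unfolding S_def inexact_subdiff_def by blast
    thus ?thesis unfolding ex by (simp add: algebra_simps)
  qed
  obtain v0 where v0: "v0 \<in> S" using Sne by blast
  have lb: "f y \<ge> ereal ((Fx - \<epsilon>) + inner v0 (y - x) - m/2*(norm (y - x))\<^sup>2)" for y
    using Sv[OF v0, of y] by (simp add: algebra_simps)
  have part1: "\<exists>g. ((\<lambda>y. real_of_ereal (moreau_env f (m + lam) y)) has_derivative (\<lambda>h. inner g h)) (at x)
            \<and> norm g \<le> (m + lam) * (2 / lam * \<eta> + sqrt (2 / lam * \<epsilon>))" if lam: "lam > 0" for lam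
  proof -
    define \<rho> where "\<rho> = m + lam"
    have mr: "m < \<rho>" unfolding \<rho>_def using lam by simp
    obtain p where fp: "f p < \<infinity>"
      and pmin: "\<forall>y. f p + ereal (\<rho>/2*(norm (p - x))\<^sup>2) \<le> f y + ereal (\<rho>/2*(norm (y - x))\<^sup>2)"
      and der: "((\<lambda>y. real_of_ereal (moreau_env f \<rho> y)) has_derivative (\<lambda>h. inner (\<rho> *\<^sub>R (x - p)) h)) (at x)"
      using env_deriv[OF cl ninf wc lb m0 mr fx] by blast
    define Fp where "Fp = real_of_ereal (f p)"
    have ep: "f p = ereal Fp" unfolding Fp_def using fp ninf[of p] by (cases "f p") auto
    define d where "d = norm (p - x)"
    have d0: "d \<ge> 0" unfolding d_def by simp
    have A: "Fp + \<rho>/2*d^2 \<le> Fx"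
      using pmin[rule_format, of x] unfolding ep ex d_def by simp
    have B: "lam/2 * d^2 \<le> \<eta> * d + \<epsilon> + \<delta>" if \<delta>: "\<delta> > 0" for \<delta>
    proof -
      have "infdist 0 S < \<eta> + \<delta>/(d+1)" using Sd \<delta> d0 by (smt (verit) divide_pos_pos)
      then obtain v where v: "v \<in> S" "norm v < \<eta> + \<delta>/(d+1)" using infdist_witness[OF Sne] by blast
      have "ereal (Fx + inner v (p - x) - m/2*d^2 - \<epsilon>) \<le> ereal Fp" using Sv[OF v(1), of p] unfolding ep d_def .
      hence C: "Fx + inner v (p - x) - m/2*d^2 - \<epsilon> \<le> Fp" by simp
      have "inner v (p - x) \<ge> - (norm v * d)" unfolding d_def
        using Cauchy_Schwarz_ineq2[of v "p - x"] by linarith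
      moreover have "norm v * d \<le> (\<eta> + \<delta>/(d+1)) * d" using v(2) d0 by (intro mult_right_mono) auto
      moreover have "\<delta>/(d+1) * d \<le> \<delta>"
      proof -
        have "d/(d+1) \<le> 1" using d0 by simp
        hence "\<delta> * (d/(d+1)) \<le> \<delta> * 1" using \<delta> by (intro mult_left_mono) auto
        moreover have "\<delta>/(d+1) * d = \<delta> * (d/(d+1))" by simp
        ultimately show ?thesis by simp
      qed
      moreover have "\<rho>/2*d^2 = m/2*d^2 + lam/2*d^2" unfolding \<rho>_def by (simp add: add_divide_distrib distrib_right)
      moreover have "(\<eta> + \<delta>/(d+1)) * d = \<eta> * d + \<delta>/(d+1) * d" by (simp add: distrib_right)
      ultimately show ?thesis using A C by linarith
    qed
    have "lam/2 * d^2 \<le> \<eta> * d + \<epsilon>"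
    proof (rule field_le_epsilon)
      fix e :: real assume "0 < e" thus "lam/2 * d^2 \<le> \<eta> * d + \<epsilon> + e" by (rule B)
    qed
    hence dle: "d \<le> 2/lam*\<eta> + sqrt (2/lam*\<epsilon>)" by (rule quad2[OF lam d0 eta0 eps0])
    have nxp: "norm (x - p) = d" unfolding d_def by (rule norm_minus_commute)
    have "norm (\<rho> *\<^sub>R (x - p)) = \<rho> * d" using mr m0 nxp by simp
    also have "\<dots> \<le> \<rho> * (2/lam*\<eta> + sqrt (2/lam*\<epsilon>))" using dle mr m0 by (intro mult_left_mono) auto
    finally show ?thesis using der unfolding \<rho>_def by blast
  qed
  moreover have "\<exists>g. ((\<lambda>y. real_of_ereal (moreau_env f (2 * m) y)) has_derivative (\<lambda>h. inner g h)) (at x)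
            \<and> norm g \<le> 4 * \<eta> + 2 * sqrt (2 * m * \<epsilon>)" if mpos: "m > 0"
  proof -
    obtain g where g: "((\<lambda>y. real_of_ereal (moreau_env f (m + m) y)) has_derivative (\<lambda>h. inner g h)) (at x)"
      "norm g \<le> (m + m) * (2 / m * \<eta> + sqrt (2 / m * \<epsilon>))" using part1[OF mpos] by blast
    have e1: "m^2 * (2 / m * \<epsilon>) = 2 * m * \<epsilon>" using mpos by (simp add: power2_eq_square)
    have "m * sqrt (2 / m * \<epsilon>) = sqrt (m^2) * sqrt (2 / m * \<epsilon>)" using mpos by simp
    also have "\<dots> = sqrt (m^2 * (2 / m * \<epsilon>))" by (rule real_sqrt_mult[symmetric])
    also have "\<dots> = sqrt (2 * m * \<epsilon>)" by (simp only: e1)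
    finally have sq: "m * sqrt (2 / m * \<epsilon>) = sqrt (2 * m * \<epsilon>)" .
    have e2: "(m + m) * (2 / m * \<eta>) = 4 * \<eta>" using mpos by simp
    have e3: "(m + m) * (2 / m * \<eta> + sqrt (2 / m * \<epsilon>)) = (m + m) * (2 / m * \<eta>) + 2 * (m * sqrt (2 / m * \<epsilon>))"
      by (simp add: distrib_left)
    have "norm g \<le> 4 * \<eta> + 2 * sqrt (2 * m * \<epsilon>)" using g(2) unfolding e3 e2 sq .
    moreover from g(1) have "((\<lambda>y. real_of_ereal (moreau_env f (2 * m) y)) has_derivative (\<lambda>h. inner g h)) (at x)"
      by (simp only: mult_2)
    ultimately show ?thesis by blast
  qed
  ultimately show ?thesis by blast
qed

end
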